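(* Let $A$ be a set with $n$ elements. The $\square$-map $p_A:Y^A\to\tilde Z_n$, $p_A(c,<)=z^k_{|c^{-1}(1)|}$ for $(c,<)\in Y^A[k]$, is $\Sigma_A$-invariant, and the induced $\square$-map $Y^A/\Sigma_A\to\tilde Z_n$ from the orbit $\square$-set (with $(Y^A/\Sigma_A)[k]=Y^A[k]/\Sigma_A$) is an isomorphism of $\square$-sets.
   Context: A precubical set ($\square$-set) $K$ is a sequence of pairwise disjoint sets $(K[n])_{n\ge0}$ with face maps $d^\varepsilon_i:K[n]\to K[n-1]$ ($1\le i\le n$, $\varepsilon\in\{0,1\}$) satisfying $d^\varepsilon_i d^\eta_j=d^\eta_{j-1}d^\varepsilon_i$ for $i<j$; $\square$-maps are families of maps $K[n]\to L[n]$ commuting with face maps. $\tilde Z_n$ is the $\square$-set with $\tilde Z_n[k]=\{z^k_j:0\le j\le n-k\}$ ($\emptyset$ for $k>n$) and $d^\varepsilon_i(z^k_j)=z^{k-1}_{j+\varepsilon}$. $Y^A$ is the $\square$-set where $Y^A[k]$ is the set of pairs $(c,<)$ with $c:A\to\{0,*,1\}$, $|c^{-1}( * )|=k$, and $<$ a strict total order on $c^{-1}( * )$; if $c^{-1}( * )=\{a_1<\dots<a_k\}$ then $d^\varepsilon_i(c,<)=(c',<')$ where $c'(a_i)=\varepsilon$, $c'=c$ elsewhere, and $<'$ is the restriction of $<$ to $c^{-1}( * )\setminus\{a_i\}$. $\Sigma_A$ acts on $Y^A$ from the right by $(c,<)\sigma=(c\circ\sigma,<\sigma)$, where $a\,(<\sigma)\,b$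 iff $\sigma(a)<\sigma(b)$. *)

theory Defs
  imports "HOL-Library.FuncSet" "HOL-Combinatorics.Permutations"
begin

text \<open>Since the K n are pairwise
  disjoint, the degree n of a cell is determined by the cell, so the face maps
  need not carry n as an argument.\<close>

definition precubical_set :: "(nat \<Rightarrow> 'x set) \<Rightarrow> (nat \<Rightarrow> nat \<Rightarrow> 'x \<Rightarrow> 'x) \<Rightarrow> bool" where
  "precubical_set K d \<longleftrightarrow>
     (\<forall>m n. m \<noteq> n \<longrightarrow> K m \<inter> K n = {}) \<and>
     (\<forall>n i e x. x \<in> K n \<and> 1 \<le> i \<and> i \<le> n \<and> e \<le> 1 \<longrightarrow> d i e x \<in> K (n - 1)) \<and>
     (\<forall>n i j e f x. x \<in> K n \<and> 1 \<le> i \<and> i < j \<and> j \<le> n \<and> e \<le> 1 \<and> f \<le> 1 \<longrightarrow>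
         d i e (d j f x) = d (j - 1) f (d i e x))"

definition cube_map ::
  "(nat \<Rightarrow> 'x set) \<Rightarrow> (nat \<Rightarrow> nat \<Rightarrow> 'x \<Rightarrow> 'x) \<Rightarrow>
   (nat \<Rightarrow> 'y set) \<Rightarrow> (nat \<Rightarrow> nat \<Rightarrow> 'y \<Rightarrow> 'y) \<Rightarrow> ('x \<Rightarrow> 'y) \<Rightarrow> bool" where
  "cube_map K d L d' f \<longleftrightarrow>
     (\<forall>n x. x \<in> K n \<longrightarrow> f x \<in> L n) \<and>
     (\<forall>n i e x. x \<in> K n \<and> 1 \<le> i \<and> i \<le> n \<and> e \<le> 1 \<longrightarrow> f (d i e x) = d' i e (f x))"

definition cube_iso ::
  "(nat \<Rightarrow> 'x set) \<Rightarrow> (nat \<Rightarrow> nat \<Rightarrow> 'x \<Rightarrow> 'x) \<Rightarrow>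
   (nat \<Rightarrow> 'y set) \<Rightarrow> (nat \<Rightarrow> nat \<Rightarrow> 'y \<Rightarrow> 'y) \<Rightarrow> ('x \<Rightarrow> 'y) \<Rightarrow> bool" where
  "cube_iso K d L d' f \<longleftrightarrow> cube_map K d L d' f \<and>
     (\<exists>g. cube_map L d' K d g \<and>
          (\<forall>n. \<forall>x\<in>K n. g (f x) = x) \<and> (\<forall>n. \<forall>y\<in>L n. f (g y) = y))"

text \<open>The cell z^k_j is represented by the pair (k, j).\<close>
definition Zt :: "nat \<Rightarrow> nat \<Rightarrow> (nat \<times> nat) set" where
  "Zt n k = (if k \<le> n then {(k, j) | j. j \<le> n - k} else {})"

definition Zt_face :: "nat \<Rightarrow> nat \<Rightarrow> nat \<times> nat \<Rightarrow> nat \<times> nat" where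
  "Zt_face i e z = (fst z - 1, snd z + e)"

datatype cval = C0 | CS | C1   (* 0, *, 1 *)

definition stars :: "'a set \<Rightarrow> ('a \<Rightarrow> cval) \<Rightarrow> 'a set" where
  "stars A c = {a \<in> A. c a = CS}"

definition Y :: "'a set \<Rightarrow> nat \<Rightarrow> (('a \<Rightarrow> cval) \<times> ('a \<times> 'a) set) set" where
  "Y A k = {(c, r). c \<in> A \<rightarrow>\<^sub>E UNIV \<and> card (stars A c) = k \<and>
              r \<subseteq> stars A c \<times> stars A c \<and> trans r \<and> irrefl r \<and> total_on (stars A c) r}"

text \<open>The i-th element (1-based) of S in the order r.\<close>
definition ord_nth :: "('a \<times> 'a) set \<Rightarrow> 'a set \<Rightarrow> nat \<Rightarrow> 'a" where
  "ord_nth r S i = (THE a. a \<in> S \<and> card {b \<in> S. (b, a) \<in> r} + 1 = i)"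

definition Y_face :: "'a set \<Rightarrow> nat \<Rightarrow> nat \<Rightarrow> ('a \<Rightarrow> cval) \<times> ('a \<times> 'a) set
                        \<Rightarrow> ('a \<Rightarrow> cval) \<times> ('a \<times> 'a) set" where
  "Y_face A i e x =
     (let c = fst x; r = snd x; S = stars A c; a = ord_nth r S i; S' = S - {a}
      in (c(a := (if e = 0 then C0 else C1)), r \<inter> (S' \<times> S')))"

definition Y_act :: "('a \<Rightarrow> 'a) \<Rightarrow> ('a \<Rightarrow> cval) \<times> ('a \<times> 'a) set
                       \<Rightarrow> ('a \<Rightarrow> cval) \<times> ('a \<times> 'a) set" where
  "Y_act \<sigma> x = (fst x \<circ> \<sigma>, {(a, b). (\<sigma> a, \<sigma> b) \<in> snd x})"

definition pA :: "'a set \<Rightarrow> ('a \<Rightarrow> cval) \<times> ('a \<times> 'a) set \<Rightarrow> nat \<times> nat" where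
  "pA A x = (card (stars A (fst x)), card {a \<in> A. fst x a = C1})"

definition Y_orbit :: "'a set \<Rightarrow> ('a \<Rightarrow> cval) \<times> ('a \<times> 'a) set
                         \<Rightarrow> (('a \<Rightarrow> cval) \<times> ('a \<times> 'a) set) set" where
  "Y_orbit A x = {Y_act \<sigma> x | \<sigma>. \<sigma> permutes A}"

definition Yq :: "'a set \<Rightarrow> nat \<Rightarrow> (('a \<Rightarrow> cval) \<times> ('a \<times> 'a) set) set set" where
  "Yq A k = Y_orbit A ` Y A k"

definition Yq_face :: "'a set \<Rightarrow> nat \<Rightarrow> nat \<Rightarrow> (('a \<Rightarrow> cval) \<times> ('a \<times> 'a) set) set
                         \<Rightarrow> (('a \<Rightarrow> cval) \<times> ('a \<times> 'a) set) set" where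
  "Yq_face A i e Q = Y_orbit A (Y_face A i e (SOME x. x \<in> Q))"

definition pA_bar :: "'a set \<Rightarrow> (('a \<Rightarrow> cval) \<times> ('a \<times> 'a) set) set \<Rightarrow> nat \<times> nat" where
  "pA_bar A Q = pA A (SOME x. x \<in> Q)"

end

theory Submission
  imports Defs
begin

definition rk :: "('a \<times> 'a) set \<Rightarrow> 'a set \<Rightarrow> 'a \<Rightarrow> nat" where
  "rk r S a = card {b \<in> S. (b, a) \<in> r}"

locale sto =
  fixes r :: "('a \<times> 'a) set" and S :: "'a set"
  assumes fin: "finite S" and sub: "r \<subseteq> S \<times> S" and tr: "trans r" and irr: "irrefl r"
    and tot: "total_on S r"
begin

lemma rk_mono: "(a, b) \<in> r \<Longrightarrow> rk r S a < rk r S b"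
proof -
  assume ab: "(a, b) \<in> r"
  have "{x \<in> S. (x, a) \<in> r} \<subset> {x \<in> S. (x, b) \<in> r}"
  proof
    show "{x \<in> S. (x, a) \<in> r} \<subseteq> {x \<in> S. (x, b) \<in> r}"
      using ab tr by (auto dest: transD)
    have "a \<in> S" using ab sub by auto
    moreover have "(a, a) \<notin> r" using irr by (auto simp: irrefl_def)
    ultimately show "{x \<in> S. (x, a) \<in> r} \<noteq> {x \<in> S. (x, b) \<in> r}" using ab by blast
  qed
  then show ?thesis unfolding rk_def by (rule psubset_card_mono[rotated]) (use fin in auto)
qed

lemma rk_less: "a \<in> S \<Longrightarrow> b \<in> S \<Longrightarrow> (a, b) \<in> r \<longleftrightarrow> rk r S a < rk r S b"
proof
  assume "a \<in> S" "b \<in> S" "rk r S a < rk r S b"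
  show "(a, b) \<in> r"
  proof (rule ccontr)
    assume "(a, b) \<notin> r"
    moreover have "a \<noteq> b" using \<open>rk r S a < rk r S b\<close> by auto
    ultimately have "(b, a) \<in> r" using tot \<open>a \<in> S\<close> \<open>b \<in> S\<close> by (auto simp: total_on_def)
    then show False using rk_mono \<open>rk r S a < rk r S b\<close> by fastforce
  qed
qed (rule rk_mono)

lemma rk_inj: "inj_on (rk r S) S"
proof (rule inj_onI)
  fix a b assume "a \<in> S" "b \<in> S" "rk r S a = rk r S b"
  then show "a = b" using tot rk_mono unfolding total_on_def by (metis less_irrefl)
qed

lemma rk_bound: "a \<in> S \<Longrightarrow> rk r S a < card S"
proof -
  assume "a \<in> S"
  have "{x \<in> S. (x, a) \<in> r} \<subset> S" using \<open>a \<in> S\<close> irr by (auto simp: irrefl_def)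
  then show ?thesis unfolding rk_def using fin by (simp add: psubset_card_mono)
qed

lemma rk_bij: "bij_betw (rk r S) S {..<card S}"
proof -
  have im: "rk r S ` S \<subseteq> {..<card S}" using rk_bound by auto
  have "card (rk r S ` S) = card {..<card S}" using card_image[OF rk_inj] by simp
  then have "rk r S ` S = {..<card S}" using card_subset_eq[OF _ im] by simp
  then show ?thesis using rk_inj by (simp add: bij_betw_def)
qed

lemma ord_nth_eq: "1 \<le> i \<Longrightarrow> i \<le> card S \<Longrightarrow>
   ord_nth r S i \<in> S \<and> rk r S (ord_nth r S i) = i - 1"
proof -
  assume i: "1 \<le> i" "i \<le> card S"
  then have "i - 1 \<in> rk r S ` S" using rk_bij by (simp add: bij_betw_def)
  then obtain a where a: "a \<in> S" "rk r S a = i - 1" by auto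
  have "ord_nth r S i = a" unfolding ord_nth_def
  proof (rule the_equality)
    show "a \<in> S \<and> card {b \<in> S. (b, a) \<in> r} + 1 = i" using a i by (simp add: rk_def)
    fix b assume "b \<in> S \<and> card {ba \<in> S. (ba, b) \<in> r} + 1 = i"
    then show "b = a" using a rk_inj i by (auto simp: rk_def inj_on_def)
  qed
  then show ?thesis using a by simp
qed

end

definition ones :: "'a set \<Rightarrow> ('a \<Rightarrow> cval) \<Rightarrow> 'a set" where
  "ones A c = {a \<in> A. c a = C1}"

lemma YD: assumes "(c, r) \<in> Y A k" "finite A"
  shows "sto r (stars A c)" "card (stars A c) = k" "c \<in> A \<rightarrow>\<^sub>E UNIV"
  using assms by (auto simp: Y_def sto_def stars_def)

lemma Y_face_mem:
  assumes finA: "finite A" and x: "x \<in> Y A k" and i: "1 \<le> i" "i \<le> k" and e: "e \<le> (1::nat)"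
  shows "Y_face A i e x \<in> Y A (k - 1) \<and> pA A (Y_face A i e x) = Zt_face i e (pA A x)"
proof -
  obtain c r where xcr: "x = (c, r)" by (cases x)
  note Yx = YD[OF x[unfolded xcr] finA]
  interpret sto r "stars A c" by (rule Yx(1))
  define S where "S = stars A c"
  define a where "a = ord_nth r S i"
  define v where "v = (if e = 0 then C0 else C1)"
  have aS: "a \<in> S" unfolding a_def S_def using ord_nth_eq i Yx(2) by auto
  then have aA: "a \<in> A" "c a = CS" unfolding S_def stars_def by auto
  have vne: "v \<noteq> CS" unfolding v_def by auto
  have F: "Y_face A i e x = (c(a := v), r \<inter> ((S - {a}) \<times> (S - {a})))"
    unfolding Y_face_def xcr a_def v_def S_def by (simp add: Let_def)
  have st: "stars A (c(a := v)) = S - {a}" using aA vne unfolding S_def stars_def by auto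
  have on: "ones A (c(a := v)) = ones A c \<union> (if e = 1 then {a} else {})"
    using aA e unfolding ones_def v_def by auto
  have "a \<notin> ones A c" using aA by (auto simp: ones_def)
  moreover have "finite (ones A c)" using finA by (simp add: ones_def)
  ultimately have cardon: "card (ones A (c(a := v))) = card (ones A c) + e"
    using on e by (cases "e = 1") auto
  have mem: "Y_face A i e x \<in> Y A (k - 1)"
  proof -
    have "c(a := v) \<in> A \<rightarrow>\<^sub>E UNIV" using Yx(3) aA by (auto simp: PiE_def extensional_def)
    moreover have "card (stars A (c(a := v))) = k - 1"
      using st aS Yx(2) finA by (simp add: S_def)
    moreover have "r \<inter> ((S - {a}) \<times> (S - {a})) \<subseteq> stars A (c(a := v)) \<times> stars A (c(a := v))"
      using st by blast
    moreover have "trans (r \<inter> ((S - {a}) \<times> (S - {a})))"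
      using tr by (rule trans_Int) (auto simp: trans_def)
    moreover have "irrefl (r \<inter> ((S - {a}) \<times> (S - {a})))" using irr by (auto simp: irrefl_def)
    moreover have "total_on (stars A (c(a := v))) (r \<inter> ((S - {a}) \<times> (S - {a})))"
      using tot st unfolding total_on_def S_def by blast
    ultimately show ?thesis unfolding F Y_def by (simp only: mem_Collect_eq prod.case)
  qed
  have "pA A (Y_face A i e x) = (card (stars A (c(a := v))), card (ones A (c(a := v))))"
    unfolding F pA_def ones_def by simp
  also have "\<dots> = (card S - 1, card (ones A c) + e)" using st cardon aS finA
    by (simp add: S_def stars_def)
  also have "\<dots> = Zt_face i e (pA A x)" unfolding Zt_face_def pA_def xcr ones_def S_def by simp
  finally have "pA A (Y_face A i e x) = Zt_face i e (pA A x)" .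
  with mem show ?thesis by simp
qed

lemma card_perm_pred:
  assumes "\<sigma> permutes A" shows "card {a \<in> A. P (\<sigma> a)} = card {b \<in> A. P b}"
proof -
  have "\<sigma> ` {a \<in> A. P (\<sigma> a)} = {b \<in> A. P b}"
  proof
    show "\<sigma> ` {a \<in> A. P (\<sigma> a)} \<subseteq> {b \<in> A. P b}" using permutes_in_image[OF assms] by auto
    show "{b \<in> A. P b} \<subseteq> \<sigma> ` {a \<in> A. P (\<sigma> a)}"
    proof
      fix b assume b: "b \<in> {b \<in> A. P b}"
      have "inv \<sigma> b \<in> A" using b permutes_in_image[OF permutes_inv[OF assms]] by auto
      moreover have "\<sigma> (inv \<sigma> b) = b" using permutes_inverses(1)[OF assms] by simp
      ultimately show "b \<in> \<sigma> ` {a \<in> A. P (\<sigma> a)}" using b by (metis (mono_tags, lifting) image_eqI mem_Collect_eq)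
    qed
  qed
  moreover have "inj \<sigma>" using assms by (rule permutes_inj)
  ultimately show ?thesis by (metis (no_types, lifting) inj_on_subset subset_UNIV card_image)
qed

lemma Y_act_mem:
  assumes p: "\<sigma> permutes A" and x: "x \<in> Y A k"
  shows "Y_act \<sigma> x \<in> Y A k \<and> pA A (Y_act \<sigma> x) = pA A x"
proof -
  obtain c r where xcr: "x = (c, r)" by (cases x)
  have Yx: "c \<in> A \<rightarrow>\<^sub>E UNIV" "card (stars A c) = k" "r \<subseteq> stars A c \<times> stars A c"
     "trans r" "irrefl r" "total_on (stars A c) r" using x unfolding xcr Y_def by auto
  define r2 where "r2 = {(a, b). (\<sigma> a, \<sigma> b) \<in> r}"
  have act: "Y_act \<sigma> x = (c \<circ> \<sigma>, r2)" unfolding Y_act_def xcr r2_def by simp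
  have inA: "\<sigma> a \<in> A \<longleftrightarrow> a \<in> A" for a using permutes_in_image[OF p] by simp
  have st2: "stars A (c \<circ> \<sigma>) = {a \<in> A. c (\<sigma> a) = CS}" by (simp add: stars_def)
  have cs: "card (stars A (c \<circ> \<sigma>)) = card (stars A c)"
    using card_perm_pred[OF p, of "\<lambda>b. c b = CS"] by (simp add: stars_def)
  have co: "card {a \<in> A. (c \<circ> \<sigma>) a = C1} = card {a \<in> A. c a = C1}"
    using card_perm_pred[OF p, of "\<lambda>b. c b = C1"] by simp
  have "c \<circ> \<sigma> \<in> A \<rightarrow>\<^sub>E UNIV" using Yx(1) permutes_not_in[OF p]
    by (auto simp: PiE_def extensional_def)
  moreover have "r2 \<subseteq> stars A (c \<circ> \<sigma>) \<times> stars A (c \<circ> \<sigma>)"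
    using Yx(3) inA unfolding r2_def stars_def by auto
  moreover have "trans r2" using Yx(4) unfolding r2_def trans_def by blast
  moreover have "irrefl r2" using Yx(5) unfolding r2_def irrefl_def by blast
  moreover have "total_on (stars A (c \<circ> \<sigma>)) r2"
    using Yx(6) permutes_inj[OF p] inA unfolding r2_def total_on_def stars_def by (auto simp: inj_eq)
  ultimately have "Y_act \<sigma> x \<in> Y A k" unfolding act Y_def using cs Yx(2)
    by (simp only: mem_Collect_eq prod.case)
  moreover have "pA A (Y_act \<sigma> x) = pA A x" unfolding act using cs co by (simp add: pA_def xcr)
  ultimately show ?thesis by simp
qed

lemma exists_Y:
  assumes fin: "finite A" and k: "k \<le> card A" and j: "j \<le> card A - k"
  shows "\<exists>x \<in> Y A k. pA A x = (k, j)"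
proof -
  define n where "n = card A"
  obtain f where f: "bij_betw f {0..<n} A" using ex_bij_betw_nat_finite[OF fin] n_def by auto
  define g where "g = inv_into {0..<n} f"
  have g: "bij_betw g A {0..<n}" unfolding g_def by (rule bij_betw_inv_into[OF f])
  have cardP: "card {a \<in> A. P (g a)} = card {m \<in> {0..<n}. P m}" for P
  proof -
    have "g ` {a \<in> A. P (g a)} = {m \<in> {0..<n}. P m}" using g unfolding bij_betw_def by auto
    moreover have "inj_on g {a \<in> A. P (g a)}" using g unfolding bij_betw_def by (auto intro: inj_on_subset)
    ultimately show ?thesis by (metis card_image)
  qed
  define c where "c = (\<lambda>a. if a \<in> A then (if g a < k then CS else if g a < k + j then C1 else C0) else undefined)"
  define S where "S = stars A c"
  define r where "r = {(a, b). a \<in> S \<and> b \<in> S \<and> g a < g b}"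
  have S: "S = {a \<in> A. g a < k}" unfolding S_def stars_def c_def by auto
  have O: "{a \<in> A. c a = C1} = {a \<in> A. \<not> g a < k \<and> g a < k + j}" unfolding c_def by auto
  have "{m \<in> {0..<n}. m < k} = {0..<k}" using k n_def by auto
  then have cS: "card S = k" unfolding S using cardP[of "\<lambda>m. m < k"] by simp
  have "{m \<in> {0..<n}. \<not> m < k \<and> m < k + j} = {k..<k+j}" using j n_def by auto
  then have cO: "card {a \<in> A. c a = C1} = j" unfolding O using cardP[of "\<lambda>m. \<not> m < k \<and> m < k + j"] by simp
  have "c \<in> A \<rightarrow>\<^sub>E UNIV" unfolding c_def by auto
  moreover have "r \<subseteq> S \<times> S" unfolding r_def by auto
  moreover have "trans r" unfolding r_def trans_def by auto
  moreover have "irrefl r" unfolding r_def irrefl_def by auto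
  moreover have "total_on S r" unfolding r_def total_on_def
    proof (intro ballI impI)
    fix a b assume ab: "a \<in> S" "b \<in> S" "a \<noteq> b"
    then have "g a \<noteq> g b" using g S unfolding bij_betw_def inj_on_def by auto
    then show "(a, b) \<in> {(a, b). a \<in> S \<and> b \<in> S \<and> g a < g b} \<or> (b, a) \<in> {(a, b). a \<in> S \<and> b \<in> S \<and> g a < g b}"
      using ab by auto
  qed
  ultimately have "(c, r) \<in> Y A k" unfolding Y_def using cS S_def
    by (simp only: mem_Collect_eq prod.case)
  moreover have "pA A (c, r) = (k, j)" unfolding pA_def using cS cO S_def by simp
  ultimately show ?thesis by blast
qed

definition zeros :: "'a set \<Rightarrow> ('a \<Rightarrow> cval) \<Rightarrow> 'a set" where
  "zeros A c = {a \<in> A. c a = C0}"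

lemma parts: "A = stars A c \<union> ones A c \<union> zeros A c"
  unfolding stars_def ones_def zeros_def using cval.exhaust by blast

lemma card_parts: assumes "finite A"
  shows "card A = card (stars A c) + card (ones A c) + card (zeros A c)"
proof -
  have "card (stars A c \<union> ones A c \<union> zeros A c) = card (stars A c) + card (ones A c) + card (zeros A c)"
    using assms by (subst card_Un_disjoint; (subst card_Un_disjoint)?)
      (auto simp: stars_def ones_def zeros_def)
  then show ?thesis using parts[of A c] by simp
qed

lemma Y_trans:
  assumes finA: "finite A" and x: "(c, r) \<in> Y A k" and y: "(c', r') \<in> Y A k"
    and eq: "pA A (c, r) = pA A (c', r')"
  shows "\<exists>\<sigma>. \<sigma> permutes A \<and> Y_act \<sigma> (c, r) = (c', r')"
proof -
  note X = YD[OF x finA] and Yy = YD[OF y finA]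
  define S where "S = stars A c"
  define S' where "S' = stars A c'"
  interpret sx: sto r S unfolding S_def by (rule X(1))
  interpret sy: sto r' S' unfolding S'_def by (rule Yy(1))
  have cO: "card (ones A c') = card (ones A c)" using eq by (simp add: pA_def ones_def)
  have cSS: "card S' = k" "card S = k" using X Yy by (simp_all add: S_def S'_def)
  have cZ: "card (zeros A c') = card (zeros A c)"
    using card_parts[OF finA, of c] card_parts[OF finA, of c'] cO cSS by (simp add: S_def S'_def)
  have finO: "finite (ones A c)" "finite (ones A c')" "finite (zeros A c)" "finite (zeros A c')"
    using finA by (auto simp: ones_def zeros_def)
  obtain h1 where h1: "bij_betw h1 (ones A c') (ones A c)"
    using finite_same_card_bij[OF finO(2,1) cO] by auto
  obtain h0 where h0: "bij_betw h0 (zeros A c') (zeros A c)"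
    using finite_same_card_bij[OF finO(4,3) cZ] by auto
  define hs where "hs = (\<lambda>a. inv_into S (rk r S) (rk r' S' a))"
  have hs: "bij_betw hs S' S"
  proof -
    have "bij_betw (inv_into S (rk r S)) {..<card S} S" by (rule bij_betw_inv_into[OF sx.rk_bij])
    then have "bij_betw (inv_into S (rk r S) \<circ> rk r' S') S' S"
      using sy.rk_bij cSS by (intro bij_betw_trans) auto
    then show ?thesis unfolding hs_def comp_def .
  qed
  have hs_rk: "rk r S (hs a) = rk r' S' a" if "a \<in> S'" for a
  proof -
    have "rk r' S' a \<in> rk r S ` S" using sx.rk_bij sy.rk_bound[OF that] cSS by (auto simp: bij_betw_def)
    then show ?thesis unfolding hs_def by (rule f_inv_into_f)
  qed
  define \<sigma> where "\<sigma> = (\<lambda>a. if a \<in> S' then hs a else if a \<in> ones A c' then h1 a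
                          else if a \<in> zeros A c' then h0 a else a)"
  have dis': "S' \<inter> ones A c' = {}" "S' \<inter> zeros A c' = {}" "ones A c' \<inter> zeros A c' = {}"
    by (auto simp: S'_def stars_def ones_def zeros_def)
  have dis: "S \<inter> ones A c = {}" "S \<inter> zeros A c = {}" "ones A c \<inter> zeros A c = {}"
    by (auto simp: S_def stars_def ones_def zeros_def)
  have b1: "bij_betw \<sigma> S' S" using hs by (rule bij_betw_cong[THEN iffD1, rotated]) (simp add: \<sigma>_def)
  have b2: "bij_betw \<sigma> (ones A c') (ones A c)" using h1 dis'
    by (intro bij_betw_cong[THEN iffD1, OF _ h1]) (auto simp: \<sigma>_def)
  have b3: "bij_betw \<sigma> (zeros A c') (zeros A c)" using h0 dis'
    by (intro bij_betw_cong[THEN iffD1, OF _ h0]) (auto simp: \<sigma>_def)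
  have "bij_betw \<sigma> (S' \<union> ones A c' \<union> zeros A c') (S \<union> ones A c \<union> zeros A c)"
    using dis by (intro bij_betw_combine b1 b2 b3) auto
  then have bA: "bij_betw \<sigma> A A" using parts[of A c] parts[of A c'] by (simp add: S_def S'_def)
  have out: "\<sigma> a = a" if "a \<notin> A" for a
    using that by (auto simp: \<sigma>_def S'_def stars_def ones_def zeros_def)
  have p: "\<sigma> permutes A" using bA out by (rule bij_imp_permutes)
  have cc: "c \<circ> \<sigma> = c'"
  proof
    fix a
    show "(c \<circ> \<sigma>) a = c' a"
    proof (cases "a \<in> A")
      case True
      then consider "a \<in> S'" | "a \<in> ones A c'" | "a \<in> zeros A c'" using parts[of A c'] S'_def by blast
      then show ?thesis
      proof cases
        case 1 then have "\<sigma> a \<in> S" using b1 by (auto simp: bij_betw_def)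
        then show ?thesis using 1 by (simp add: S_def S'_def stars_def)
      next
        case 2 then have "\<sigma> a \<in> ones A c" using b2 by (auto simp: bij_betw_def)
        then show ?thesis using 2 by (simp add: ones_def)
      next
        case 3 then have "\<sigma> a \<in> zeros A c" using b3 by (auto simp: bij_betw_def)
        then show ?thesis using 3 by (simp add: zeros_def)
      qed
    next
      case False
      then show ?thesis using out X(3) Yy(3) by (simp add: PiE_def extensional_def)
    qed
  qed
  have bk: "a \<in> S'" if "\<sigma> a \<in> S" for a
  proof (cases "a \<in> A")
    case True
    then consider "a \<in> S'" | "a \<in> ones A c'" | "a \<in> zeros A c'" using parts[of A c'] S'_def by blast
    then show ?thesis
    proof cases
      case 2 then have "\<sigma> a \<in> ones A c" using b2 by (auto simp: bij_betw_def)
      then show ?thesis using that dis by auto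
    next
      case 3 then have "\<sigma> a \<in> zeros A c" using b3 by (auto simp: bij_betw_def)
      then show ?thesis using that dis by auto
    qed simp
  next
    case False
    then show ?thesis using out[OF False] that by (simp add: S_def stars_def)
  qed
  have rr: "{(a, b). (\<sigma> a, \<sigma> b) \<in> r} = r'"
  proof (intro set_eqI iffI; clarify)
    fix a b assume ab: "(\<sigma> a, \<sigma> b) \<in> r"
    then have "\<sigma> a \<in> S" "\<sigma> b \<in> S" using sx.sub by auto
    then have "a \<in> S'" "b \<in> S'" using bk by auto
    then show "(a, b) \<in> r'" using ab sx.rk_less sy.rk_less hs_rk \<open>\<sigma> a \<in> S\<close> \<open>\<sigma> b \<in> S\<close>
      by (simp add: \<sigma>_def)
  next
    fix a b assume ab: "(a, b) \<in> r'"
    then have "a \<in> S'" "b \<in> S'" using sy.sub by auto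
    moreover have "\<sigma> a \<in> S" "\<sigma> b \<in> S" using b1 calculation by (auto simp: bij_betw_def)
    ultimately show "(\<sigma> a, \<sigma> b) \<in> r" using ab sx.rk_less sy.rk_less hs_rk
      by (simp add: \<sigma>_def)
  qed
  show ?thesis using p cc rr by (auto simp: Y_act_def)
qed

lemma orbit_eq:
  assumes finA: "finite A" and x: "x \<in> Y A k"
  shows "Y_orbit A x = {y \<in> Y A k. pA A y = pA A x}"
proof
  show "Y_orbit A x \<subseteq> {y \<in> Y A k. pA A y = pA A x}"
    using Y_act_mem[OF _ x] unfolding Y_orbit_def by auto
  show "{y \<in> Y A k. pA A y = pA A x} \<subseteq> Y_orbit A x"
  proof clarify
    fix y assume y: "y \<in> Y A k" "pA A y = pA A x"
    obtain c r where xcr: "x = (c, r)" by (cases x)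
    obtain c' r' where ycr: "y = (c', r')" by (cases y)
    obtain \<sigma> where "\<sigma> permutes A" "Y_act \<sigma> (c, r) = (c', r')"
      using Y_trans[OF finA x[unfolded xcr] y(1)[unfolded ycr]] y(2) xcr ycr by metis
    then have "\<exists>\<tau>. (c', r') = Y_act \<tau> (c, r) \<and> \<tau> permutes A" by metis
    then show "y \<in> Y_orbit A x" unfolding Y_orbit_def xcr ycr by simp
  qed
qed

lemma pA_Zt: assumes finA: "finite A" and x: "x \<in> Y A k"
  shows "pA A x \<in> Zt (card A) k"
proof -
  obtain c r where xcr: "x = (c, r)" by (cases x)
  have "card (stars A c) = k" using YD[OF x[unfolded xcr] finA] by simp
  then show ?thesis using card_parts[OF finA, of c]
    by (auto simp: Zt_def pA_def xcr ones_def)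
qed

lemma orbit_some:
  assumes finA: "finite A" and x: "x \<in> Y A k"
  shows "(SOME y. y \<in> Y_orbit A x) \<in> Y A k \<and> pA A (SOME y. y \<in> Y_orbit A x) = pA A x"
proof -
  have "x \<in> Y_orbit A x" using orbit_eq[OF finA x] x by auto
  then have "(SOME y. y \<in> Y_orbit A x) \<in> Y_orbit A x" by (rule someI)
  then show ?thesis using orbit_eq[OF finA x] by auto
qed

lemma fst_pA: assumes finA: "finite A" and x: "x \<in> Y A k" shows "fst (pA A x) = k"
proof -
  obtain c r where xcr: "x = (c, r)" by (cases x)
  show ?thesis using YD[OF x[unfolded xcr] finA] by (simp add: pA_def xcr)
qed

theorem proposition2p16:
  fixes A :: "'a set" and n :: nat
  assumes "finite A" and "card A = n"
  shows "cube_map (Y A) (Y_face A) (Zt n) Zt_face (pA A)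
       \<and> (\<forall>\<sigma> k x. \<sigma> permutes A \<and> x \<in> Y A k \<longrightarrow> pA A (Y_act \<sigma> x) = pA A x)
       \<and> cube_iso (Yq A) (Yq_face A) (Zt n) Zt_face (pA_bar A)"
proof (intro conjI)
  note finA = assms(1)
  show "cube_map (Y A) (Y_face A) (Zt n) Zt_face (pA A)"
    unfolding cube_map_def using pA_Zt[OF finA] Y_face_mem[OF finA] assms(2) by blast
  show "\<forall>\<sigma> k x. \<sigma> permutes A \<and> x \<in> Y A k \<longrightarrow> pA A (Y_act \<sigma> x) = pA A x"
    using Y_act_mem by blast
  define g where "g = (\<lambda>z. {y \<in> Y A (fst z). pA A y = z})"
  have gz: "\<exists>x0 \<in> Y A k. pA A x0 = z \<and> g z = Y_orbit A x0" if z: "z \<in> Zt n k" for z k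
  proof -
    obtain j where zj: "z = (k, j)" "k \<le> n" "j \<le> n - k" using z by (auto simp: Zt_def split: if_splits)
    obtain x0 where x0: "x0 \<in> Y A k" "pA A x0 = (k, j)" using exists_Y[OF finA] zj assms(2) by metis
    show ?thesis using x0 orbit_eq[OF finA x0(1)] zj by (auto simp: g_def)
  qed
  have pbar: "pA_bar A (Y_orbit A x) = pA A x" if "x \<in> Y A k" for x k
    using orbit_some[OF finA that] by (simp add: pA_bar_def)
  have cm1: "cube_map (Yq A) (Yq_face A) (Zt n) Zt_face (pA_bar A)"
    unfolding cube_map_def
  proof (intro conjI allI impI)
    fix k Q assume "Q \<in> Yq A k"
    then obtain x where x: "x \<in> Y A k" "Q = Y_orbit A x" by (auto simp: Yq_def)
    then show "pA_bar A Q \<in> Zt n k" using pbar pA_Zt[OF finA] assms(2) by simp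
  next
    fix k i e Q assume H: "Q \<in> Yq A k \<and> 1 \<le> i \<and> i \<le> k \<and> e \<le> (1::nat)"
    then have Q: "Q \<in> Yq A k" and ie: "1 \<le> i" "i \<le> k" "e \<le> (1::nat)" by auto
    then obtain x where x: "x \<in> Y A k" "Q = Y_orbit A x" by (auto simp: Yq_def)
    define y0 where "y0 = (SOME y. y \<in> Q)"
    have y0: "y0 \<in> Y A k" "pA A y0 = pA A x" using orbit_some[OF finA x(1)] x(2) y0_def by auto
    note F = Y_face_mem[OF finA y0(1) ie]
    have "pA_bar A (Yq_face A i e Q) = pA A (Y_face A i e y0)"
      unfolding Yq_face_def y0_def[symmetric] using pbar F by blast
    also have "\<dots> = Zt_face i e (pA_bar A Q)" using F y0 pbar x by simp
    finally show "pA_bar A (Yq_face A i e Q) = Zt_face i e (pA_bar A Q)" .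
  qed
  have cm2: "cube_map (Zt n) Zt_face (Yq A) (Yq_face A) g"
    unfolding cube_map_def
  proof (intro conjI allI impI)
    fix k z assume "z \<in> Zt n k"
    then obtain x0 where "x0 \<in> Y A k" "g z = Y_orbit A x0" using gz by blast
    then show "g z \<in> Yq A k" by (simp add: Yq_def)
  next
    fix k i e z assume H: "z \<in> Zt n k \<and> 1 \<le> i \<and> i \<le> k \<and> e \<le> (1::nat)"
    then have z: "z \<in> Zt n k" and ie: "1 \<le> i" "i \<le> k" "e \<le> (1::nat)" by auto
    obtain x0 where x0: "x0 \<in> Y A k" "pA A x0 = z" "g z = Y_orbit A x0" using gz[OF z] by blast
    define y0 where "y0 = (SOME y. y \<in> g z)"
    have y0: "y0 \<in> Y A k" "pA A y0 = z" using orbit_some[OF finA x0(1)] x0 y0_def by auto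
    note F = Y_face_mem[OF finA y0(1) ie]
    have "Yq_face A i e (g z) = Y_orbit A (Y_face A i e y0)" unfolding Yq_face_def y0_def ..
    also have "\<dots> = {y \<in> Y A (k - 1). pA A y = Zt_face i e z}" using orbit_eq[OF finA conjunct1[OF F]] conjunct2[OF F] y0(2) by simp
    also have "\<dots> = g (Zt_face i e z)" unfolding g_def Zt_face_def using y0 fst_pA[OF finA y0(1)]
      by auto
    finally show "g (Zt_face i e z) = Yq_face A i e (g z)" by simp
  qed
  show "cube_iso (Yq A) (Yq_face A) (Zt n) Zt_face (pA_bar A)"
    unfolding cube_iso_def
  proof (intro conjI exI[of _ g] cm1 cm2 allI ballI)
    fix k Q assume "Q \<in> Yq A k"
    then obtain x where x: "x \<in> Y A k" "Q = Y_orbit A x" by (auto simp: Yq_def)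
    show "g (pA_bar A Q) = Q" using pbar[OF x(1)] x orbit_eq[OF finA x(1)] fst_pA[OF finA x(1)]
      by (simp add: g_def)
  next
    fix k z assume "z \<in> Zt n k"
    then obtain x0 where x0: "x0 \<in> Y A k" "pA A x0 = z" "g z = Y_orbit A x0" using gz by blast
    show "pA_bar A (g z) = z" using x0 pbar by simp
  qed
qed

end
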